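(* Let $n,m\ge1$, $p_{n,m}$ stable of degree $n$ in $z$ and $m$ in $w$, and $0\le k\le m-1$. Then $a_k$ satisfies: (a) $a_k\in\operatorname{span}\{z^iw^j:0\le i\le 2n,\ 0\le j\le m-1\}$; (b) in $L^2\!\left(\frac{d\sigma}{|p_{n,m}|^2}\right)$, $a_k$ is orthogonal to all $z^iw^j$ with $0\le i\le 2n$, $0\le j\le m-1$, $j\ne k$, and to all $z^iw^k$ with $0\le i\le 2n$, $i\ne n$; (c) $\|a_k\|^2=\int_{-\pi}^{\pi}T_{k,k}(e^{i\theta})\,\frac{d\theta}{2\pi}$, the norm taken in $L^2\!\left(\frac{d\sigma}{|p_{n,m}|^2}\right)$. Moreover, any polynomial $f$ satisfying (a), (b), (c) (with $f$ in place of $a_k$) is of the form $f=c\,a_k$ with $|c|=1$.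
   Context: $\sigma$ is normalized Lebesgue measure on $\mathbb{T}^2$; $p_{n,m}$ is stable if it has no zeros in $\{|z|\le1,|w|\le1\}$. Write $p_{n,m}(z,w)=\sum_{i=0}^m p_i(z)w^i$ and $\bar p_i(z)=\overline{p_i(\bar z)}$. Set $\tilde p_{n,m}(z,w)=z^nw^m\overline{p_{n,m}(1/\bar z,1/\bar w)}$, $L(z,w;\eta)=z^n\frac{p_{n,m}(z,w)\overline{p_{n,m}(1/\bar z,\eta)}-\tilde p_{n,m}(z,w)\overline{\tilde p_{n,m}(1/\bar z,\eta)}}{1-w\bar\eta}$ (a polynomial in $z,w,\bar\eta$), and define $a_j$ by $L=\sum_{j=0}^{m-1}a_j(z,w)\bar\eta^j$. $T_m(z)$ is the $m\times m$ matrix (rows and columns indexed $0,\dots,m-1$) $T_m(z)=M_1M_2-M_3M_4$, where $M_1$ is lower triangular with $(r,s)$ entry $p_{r-s}(z)$ for $r\ge s$; $M_2$ is upper triangular with $(r,s)$ entry $\bar p_{s-r}(1/z)$ for $s\ge r$; $M_3$ is lower triangular with $(r,s)$ entry $\bar p_{m-r+s}(1/z)$ for $r\ge s$; $M_4$ is upper triangular with $(r,s)$ entry $p_{m-s+r}(z)$ for $s\ge r$. $T_{k,k}$ denotes its $(k,k)$ entry. *)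

theory Defs
  imports "HOL-Analysis.Analysis"
begin

definition peval :: "(nat \<Rightarrow> nat \<Rightarrow> complex) \<Rightarrow> nat \<Rightarrow> nat \<Rightarrow> complex \<Rightarrow> complex \<Rightarrow> complex" where
  "peval P n m z w = (\<Sum>i\<le>n. \<Sum>j\<le>m. P i j * z ^ i * w ^ j)"

definition has_bidegree :: "(nat \<Rightarrow> nat \<Rightarrow> complex) \<Rightarrow> nat \<Rightarrow> nat \<Rightarrow> bool" where
  "has_bidegree P n m \<longleftrightarrow> (\<forall>i j. (n < i \<or> m < j) \<longrightarrow> P i j = 0)
      \<and> (\<exists>j. P n j \<noteq> 0) \<and> (\<exists>i. P i m \<noteq> 0)"

definition stable :: "(nat \<Rightarrow> nat \<Rightarrow> complex) \<Rightarrow> nat \<Rightarrow> nat \<Rightarrow> bool" where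
  "stable P n m \<longleftrightarrow> (\<forall>z w. cmod z \<le> 1 \<longrightarrow> cmod w \<le> 1 \<longrightarrow> peval P n m z w \<noteq> 0)"

text \<open>p_i(z) (coefficient of w^i) and pbar_i(z) = conj (p_i (conj z)).\<close>
definition pcoef :: "(nat \<Rightarrow> nat \<Rightarrow> complex) \<Rightarrow> nat \<Rightarrow> nat \<Rightarrow> complex \<Rightarrow> complex" where
  "pcoef P n i z = (\<Sum>l\<le>n. P l i * z ^ l)"

definition pbar :: "(nat \<Rightarrow> nat \<Rightarrow> complex) \<Rightarrow> nat \<Rightarrow> nat \<Rightarrow> complex \<Rightarrow> complex" where
  "pbar P n i z = (\<Sum>l\<le>n. cnj (P l i) * z ^ l)"

text \<open>Reflected polynomial z^n w^m conj(p(1/conj z, 1/conj w)), written as the polynomial it is.\<close>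
definition ptilde :: "(nat \<Rightarrow> nat \<Rightarrow> complex) \<Rightarrow> nat \<Rightarrow> nat \<Rightarrow> complex \<Rightarrow> complex \<Rightarrow> complex" where
  "ptilde P n m z w = (\<Sum>i\<le>n. \<Sum>j\<le>m. cnj (P i j) * z ^ (n - i) * w ^ (m - j))"

text \<open>The kernel L(z,w;eta), for z \<noteq> 0 and w conj(eta) \<noteq> 1.\<close>
definition Lker :: "(nat \<Rightarrow> nat \<Rightarrow> complex) \<Rightarrow> nat \<Rightarrow> nat \<Rightarrow> complex \<Rightarrow> complex \<Rightarrow> complex \<Rightarrow> complex" where
  "Lker P n m z w \<eta> = z ^ n *
     (peval P n m z w * cnj (peval P n m (1 / cnj z) \<eta>)
      - ptilde P n m z w * cnj (ptilde P n m (1 / cnj z) \<eta>)) / (1 - w * cnj \<eta>)"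

definition is_bipoly :: "(complex \<Rightarrow> complex \<Rightarrow> complex) \<Rightarrow> bool" where
  "is_bipoly f \<longleftrightarrow> (\<exists>C N. \<forall>z w. f z w = (\<Sum>i\<le>N. \<Sum>j\<le>N. C i j * z ^ i * w ^ j))"

definition in_span_box :: "nat \<Rightarrow> nat \<Rightarrow> (complex \<Rightarrow> complex \<Rightarrow> complex) \<Rightarrow> bool" where
  "in_span_box n m f \<longleftrightarrow> (\<exists>C. \<forall>z w. f z w = (\<Sum>i\<le>2*n. \<Sum>j<m. C i j * z ^ i * w ^ j))"

text \<open>Inner product of L^2(d\<sigma>/|p|^2) on the torus, \<sigma> normalized Lebesgue measure.\<close>
definition wip :: "(nat \<Rightarrow> nat \<Rightarrow> complex) \<Rightarrow> nat \<Rightarrow> nat \<Rightarrow> (complex \<Rightarrow> complex \<Rightarrow> complex)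
    \<Rightarrow> (complex \<Rightarrow> complex \<Rightarrow> complex) \<Rightarrow> complex" where
  "wip P n m f g = integral (cbox (-pi, -pi) (pi, pi))
      (\<lambda>x::real \<times> real. f (cis (fst x)) (cis (snd x)) * cnj (g (cis (fst x)) (cis (snd x)))
          / of_real ((cmod (peval P n m (cis (fst x)) (cis (snd x)))) ^ 2)) / of_real (4 * pi ^ 2)"

definition monom2 :: "nat \<Rightarrow> nat \<Rightarrow> complex \<Rightarrow> complex \<Rightarrow> complex" where
  "monom2 i j = (\<lambda>z w. z ^ i * w ^ j)"

text \<open>Entry (r,s) of T_m(z) = M1 M2 - M3 M4 (indices 0..m-1).\<close>
definition Tent :: "(nat \<Rightarrow> nat \<Rightarrow> complex) \<Rightarrow> nat \<Rightarrow> nat \<Rightarrow> complex \<Rightarrow> nat \<Rightarrow> nat \<Rightarrow> complex" where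
  "Tent P n m z r s = (\<Sum>t<m.
      (if t \<le> r then pcoef P n (r - t) z else 0) * (if t \<le> s then pbar P n (s - t) (1 / z) else 0)
    - (if t \<le> r then pbar P n (m - r + t) (1 / z) else 0) * (if t \<le> s then pcoef P n (m - s + t) z else 0))"

end

theory Submission
  imports Defs
begin


definition pst :: "(nat \<Rightarrow> nat \<Rightarrow> complex) \<Rightarrow> nat \<Rightarrow> nat \<Rightarrow> complex \<Rightarrow> complex" where
  "pst P n t z = (\<Sum>l\<le>n. cnj (P l t) * z ^ (n - l))"

definition Xc :: "(nat \<Rightarrow> nat \<Rightarrow> complex) \<Rightarrow> nat \<Rightarrow> nat \<Rightarrow> nat \<Rightarrow> nat \<Rightarrow> complex \<Rightarrow> complex" where
  "Xc P n m i t z = pcoef P n i z * pst P n t z - pst P n (m - i) z * pcoef P n (m - t) z"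

definition Bt :: "(nat \<Rightarrow> nat \<Rightarrow> complex) \<Rightarrow> nat \<Rightarrow> nat \<Rightarrow> nat \<Rightarrow> complex \<Rightarrow> complex \<Rightarrow> complex" where
  "Bt P n m t z w = (\<Sum>i\<le>m. w ^ i * Xc P n m i t z)"

definition Aex :: "(nat \<Rightarrow> nat \<Rightarrow> complex) \<Rightarrow> nat \<Rightarrow> nat \<Rightarrow> nat \<Rightarrow> complex \<Rightarrow> complex \<Rightarrow> complex" where
  "Aex P n m c z w = (\<Sum>t\<le>c. w ^ (c - t) * Bt P n m t z w)"

lemma sum_invol_zero:
  fixes g :: "'a \<Rightarrow> complex"
  assumes "finite D" "\<And>x. x \<in> D \<Longrightarrow> s x \<in> D" "\<And>x. x \<in> D \<Longrightarrow> s (s x) = x"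
    "\<And>x. x \<in> D \<Longrightarrow> g (s x) = - g x"
  shows "sum g D = 0"
proof -
  have "sum g D = sum (\<lambda>x. g (s x)) D"
    by (rule sum.reindex_bij_witness[where i=s and j=s]) (use assms in auto)
  also have "\<dots> = - sum g D" using assms(4) by (simp add: sum_negf)
  finally show ?thesis by simp
qed

lemma Xc_swap: "i \<le> m \<Longrightarrow> t \<le> m \<Longrightarrow> Xc P n m (m - t) (m - i) z = - Xc P n m i t z"
  unfolding Xc_def by (simp add: algebra_simps)

lemma Aex_Suc: "Aex P n m (Suc c) z w = w * Aex P n m c z w + Bt P n m (Suc c) z w"
proof -
  have "Aex P n m (Suc c) z w = (\<Sum>t\<le>c. w ^ (Suc c - t) * Bt P n m t z w) + Bt P n m (Suc c) z w"
    unfolding Aex_def by simp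
  also have "(\<Sum>t\<le>c. w ^ (Suc c - t) * Bt P n m t z w) = w * Aex P n m c z w"
    unfolding Aex_def sum_distrib_left
    by (rule sum.cong) (auto simp: Suc_diff_le mult.assoc)
  finally show ?thesis .
qed

lemma Aex_tel: "(1 - w * e) * (\<Sum>c\<le>M. e ^ c * Aex P n m c z w)
   = (\<Sum>t\<le>M. e ^ t * Bt P n m t z w) - e ^ Suc M * w * Aex P n m M z w"
proof (induction M)
  case 0 then show ?case by (simp add: Aex_def algebra_simps)
next
  case (Suc M)
  show ?case
    by (simp add: distrib_left Suc.IH Aex_Suc) (simp add: algebra_simps)
qed

lemma Bt_invol: "(\<Sum>t\<le>m. w ^ (m - t) * Bt P n m t z w) = 0"
proof -
  have "(\<Sum>t\<le>m. w ^ (m - t) * Bt P n m t z w) =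
      (\<Sum>t\<le>m. \<Sum>i\<le>m. w ^ (i + (m - t)) * Xc P n m i t z)"
    unfolding Bt_def sum_distrib_left by (intro sum.cong refl) (simp only: power_add mult_ac)
  also have "\<dots> = (\<Sum>(t,i)\<in>{..m}\<times>{..m}. w ^ (i + (m - t)) * Xc P n m i t z)"
    by (rule sum.cartesian_product)
  also have "\<dots> = 0"
  proof (rule sum_invol_zero[where s="\<lambda>(t,i). (m - i, m - t)"])
    fix x assume "x \<in> {..m}\<times>{..m}"
    then obtain t i where x: "x = (t,i)" "t \<le> m" "i \<le> m" by auto
    have "m - t + (m - (m - i)) = i + (m - t)" using x by simp
    then show "(\<lambda>(t,i). w ^ (i + (m - t)) * Xc P n m i t z) ((\<lambda>(t,i). (m - i, m - t)) x) =
       - (\<lambda>(t,i). w ^ (i + (m - t)) * Xc P n m i t z) x"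
      using x by (simp add: Xc_swap)
  qed auto
  finally show ?thesis .
qed


lemma w_Aex_last: assumes "1 \<le> m" shows "w * Aex P n m (m - 1) z w = - Bt P n m m z w"
proof -
  have "w * Aex P n m (m - 1) z w = (\<Sum>t\<le>m - 1. w ^ (m - t) * Bt P n m t z w)"
    unfolding Aex_def sum_distrib_left
  proof (intro sum.cong refl)
    fix t assume "t \<in> {..m-1}"
    then have "m - t = Suc (m - 1 - t)" using assms by auto
    then show "w * (w ^ (m - 1 - t) * Bt P n m t z w) = w ^ (m - t) * Bt P n m t z w" by simp
  qed
  moreover have "(\<Sum>t\<le>m. w ^ (m - t) * Bt P n m t z w) = (\<Sum>t\<le>m - 1. w ^ (m - t) * Bt P n m t z w) + Bt P n m m z w"
    using assms by (cases m) auto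
  ultimately show ?thesis using Bt_invol[of w m P n z] by (simp add: eq_neg_iff_add_eq_0)
qed

lemma sum_rev_atMost: "(\<Sum>i\<le>m. f (m - i)) = (\<Sum>i\<le>(m::nat). f i)"
  by (rule sum.reindex_bij_witness[where i="\<lambda>i. m-i" and j="\<lambda>i. m-i"]) auto

lemma peval_alt: "peval P n m z w = (\<Sum>i\<le>m. pcoef P n i z * w ^ i)"
  unfolding peval_def pcoef_def sum_distrib_right
  by (subst sum.swap) simp

lemma ptilde_alt: "ptilde P n m z w = (\<Sum>j\<le>m. pst P n j z * w ^ (m - j))"
  unfolding ptilde_def pst_def sum_distrib_right
  by (subst sum.swap) simp

lemma peval_refl: assumes "z \<noteq> 0"
  shows "z ^ n * cnj (peval P n m (1 / cnj z) \<eta>) = (\<Sum>t\<le>m. pst P n t z * cnj \<eta> ^ t)"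
proof -
  have "z ^ n * cnj (peval P n m (1 / cnj z) \<eta>) = (\<Sum>i\<le>n. \<Sum>j\<le>m. cnj (P i j) * (z ^ n * (1 / z) ^ i) * cnj \<eta> ^ j)"
    unfolding peval_def by (simp add: sum_distrib_left mult_ac)
  also have "\<dots> = (\<Sum>i\<le>n. \<Sum>j\<le>m. cnj (P i j) * z ^ (n - i) * cnj \<eta> ^ j)"
  proof (intro sum.cong refl)
    fix i j assume "i \<in> {..n}"
    then have "z ^ n = z ^ (n - i) * z ^ i" by (simp add: power_add[symmetric])
    then show "cnj (P i j) * (z ^ n * (1 / z) ^ i) * cnj \<eta> ^ j = cnj (P i j) * z ^ (n - i) * cnj \<eta> ^ j"
      using assms by (simp add: power_one_over field_simps)
  qed
  also have "\<dots> = (\<Sum>t\<le>m. pst P n t z * cnj \<eta> ^ t)"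
    unfolding pst_def sum_distrib_right by (subst sum.swap) simp
  finally show ?thesis .
qed

lemma ptilde_refl: assumes "z \<noteq> 0"
  shows "z ^ n * cnj (ptilde P n m (1 / cnj z) \<eta>) = (\<Sum>t\<le>m. pcoef P n t z * cnj \<eta> ^ (m - t))"
proof -
  have "z ^ n * cnj (ptilde P n m (1 / cnj z) \<eta>) = (\<Sum>i\<le>n. \<Sum>j\<le>m. P i j * (z ^ n * (1 / z) ^ (n - i)) * cnj \<eta> ^ (m - j))"
    unfolding ptilde_def by (simp add: sum_distrib_left mult_ac)
  also have "\<dots> = (\<Sum>i\<le>n. \<Sum>j\<le>m. P i j * z ^ i * cnj \<eta> ^ (m - j))"
  proof (intro sum.cong refl)
    fix i j assume "i \<in> {..n}"
    then have "z ^ n = z ^ (n - i) * z ^ i" by (simp add: power_add[symmetric])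
    then show "P i j * (z ^ n * (1 / z) ^ (n - i)) * cnj \<eta> ^ (m - j) = P i j * z ^ i * cnj \<eta> ^ (m - j)"
      using assms by (simp add: power_one_over field_simps)
  qed
  also have "\<dots> = (\<Sum>t\<le>m. pcoef P n t z * cnj \<eta> ^ (m - t))"
    unfolding pcoef_def sum_distrib_right by (subst sum.swap) simp
  finally show ?thesis .
qed

lemma Bt_alt: "Bt P n m t z w = peval P n m z w * pst P n t z - ptilde P n m z w * pcoef P n (m - t) z"
proof -
  have r: "(\<Sum>i\<le>m. w ^ i * pst P n (m - i) z) = ptilde P n m z w"
    unfolding ptilde_alt by (subst sum_rev_atMost[symmetric]) (simp add: mult.commute)
  have "(\<Sum>i\<le>m. w ^ i * Xc P n m i t z) = (\<Sum>i\<le>m. pcoef P n i z * w ^ i) * pst P n t z - (\<Sum>i\<le>m. w ^ i * pst P n (m - i) z) * pcoef P n (m - t) z"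
    unfolding Xc_def sum_distrib_right right_diff_distrib sum_subtractf by (simp add: mult_ac)
  then show ?thesis unfolding Bt_def peval_alt r by simp
qed

lemma numer_alt: assumes "z \<noteq> 0"
  shows "z ^ n * (peval P n m z w * cnj (peval P n m (1 / cnj z) \<eta>)
      - ptilde P n m z w * cnj (ptilde P n m (1 / cnj z) \<eta>))
    = (\<Sum>t\<le>m. cnj \<eta> ^ t * Bt P n m t z w)"
proof -
  have r: "(\<Sum>t\<le>m. pcoef P n t z * cnj \<eta> ^ (m - t)) = (\<Sum>t\<le>m. cnj \<eta> ^ t * pcoef P n (m - t) z)"
    by (subst sum_rev_atMost[symmetric]) (simp add: mult.commute)
  have "z ^ n * (peval P n m z w * cnj (peval P n m (1 / cnj z) \<eta>)
      - ptilde P n m z w * cnj (ptilde P n m (1 / cnj z) \<eta>))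
     = peval P n m z w * (z ^ n * cnj (peval P n m (1 / cnj z) \<eta>))
      - ptilde P n m z w * (z ^ n * cnj (ptilde P n m (1 / cnj z) \<eta>))"
    by (simp add: algebra_simps)
  also have "\<dots> = (\<Sum>t\<le>m. cnj \<eta> ^ t * Bt P n m t z w)"
    unfolding peval_refl[OF assms] ptilde_refl[OF assms] r Bt_alt
    by (simp add: sum_distrib_left right_diff_distrib sum_subtractf mult_ac)
  finally show ?thesis .
qed

lemma Lker_alt: assumes "z \<noteq> 0" "w * cnj \<eta> \<noteq> 1" "1 \<le> m"
  shows "Lker P n m z w \<eta> = (\<Sum>c<m. Aex P n m c z w * cnj \<eta> ^ c)"
proof -
  have lt: "{..<m} = {..m-1}" using assms(3) by auto
  have "(\<Sum>t\<le>m. cnj \<eta> ^ t * Bt P n m t z w) = (\<Sum>t\<le>m-1. cnj \<eta> ^ t * Bt P n m t z w) + cnj \<eta> ^ m * Bt P n m m z w"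
    using assms(3) by (cases m) auto
  also have "\<dots> = (1 - w * cnj \<eta>) * (\<Sum>c\<le>m-1. cnj \<eta> ^ c * Aex P n m c z w)"
    unfolding Aex_tel using w_Aex_last[OF assms(3)] assms(3)
    by (simp add: mult.assoc)
  finally have eq: "(\<Sum>t\<le>m. cnj \<eta> ^ t * Bt P n m t z w) = (1 - w * cnj \<eta>) * (\<Sum>c\<le>m-1. cnj \<eta> ^ c * Aex P n m c z w)" .
  have ne: "1 - w * cnj \<eta> \<noteq> 0" using assms(2) by simp
  show ?thesis
    unfolding Lker_def numer_alt[OF assms(1)] eq lt using ne by (simp add: mult.commute)
qed


lemma box_monom: assumes "i \<le> 2*n" "j < m" shows "in_span_box n m (\<lambda>z w. c * z ^ i * w ^ j)"
  unfolding in_span_box_def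
proof (intro exI allI)
  fix z w :: complex
  have inner: "(\<Sum>j'<m. (if j' = j then c else 0) * z ^ i * w ^ j') = c * z ^ i * w ^ j"
  proof -
    have "(\<Sum>j'<m. (if j' = j then c else 0) * z ^ i * w ^ j') = (\<Sum>j'<m. if j' = j then c * z ^ i * w ^ j else 0)"
      by (intro sum.cong refl) auto
    then show ?thesis using assms by simp
  qed
  have "(\<Sum>i'\<le>2*n. \<Sum>j'<m. (if i' = i then if j' = j then c else 0 else 0) * z ^ i' * w ^ j')
      = (\<Sum>i'\<le>2*n. if i' = i then c * z ^ i * w ^ j else 0)"
    using inner by (intro sum.cong refl) auto
  also have "\<dots> = c * z ^ i * w ^ j" using assms by simp
  finally show "c * z ^ i * w ^ j = (\<Sum>i'\<le>2*n. \<Sum>j'<m. (if i' = i then if j' = j then c else 0 else 0) * z ^ i' * w ^ j')" by simp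
qed

lemma box_add: "in_span_box n m f \<Longrightarrow> in_span_box n m g \<Longrightarrow> in_span_box n m (\<lambda>z w. f z w + g z w)"
  unfolding in_span_box_def
  apply (elim exE)
  subgoal for C D by (rule exI[where x="\<lambda>i j. C i j + D i j"]) (simp add: distrib_right sum.distrib)
  done

lemma box_smult: "in_span_box n m f \<Longrightarrow> in_span_box n m (\<lambda>z w. c * f z w)"
  unfolding in_span_box_def
  apply (elim exE)
  subgoal for C by (rule exI[where x="\<lambda>i j. c * C i j"]) (simp add: sum_distrib_left mult_ac)
  done

lemma box_diff: "in_span_box n m f \<Longrightarrow> in_span_box n m g \<Longrightarrow> in_span_box n m (\<lambda>z w. f z w - g z w)"
  using box_add[of n m f "\<lambda>z w. (-1) * g z w"] box_smult[of n m g "-1"] by simp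

lemma box_zero: "in_span_box n m (\<lambda>z w. 0)"
  unfolding in_span_box_def by (rule exI[where x="\<lambda>i j. 0"]) simp

lemma box_sum: "finite S \<Longrightarrow> (\<And>x. x \<in> S \<Longrightarrow> in_span_box n m (f x)) \<Longrightarrow> in_span_box n m (\<lambda>z w. \<Sum>x\<in>S. f x z w)"
proof (induction S rule: finite_induct)
  case empty then show ?case using box_zero by simp
next
  case (insert x F)
  then show ?case using box_add[of n m "f x" "\<lambda>z w. \<Sum>x\<in>F. f x z w"] by simp
qed


lemma pc_pst_exp: "pcoef P n a z * pst P n b z = (\<Sum>l\<le>n. \<Sum>l'\<le>n. (P l a * cnj (P l' b)) * z ^ (l + (n - l')))"
  unfolding pcoef_def pst_def sum_product by (intro sum.cong refl) (simp only: power_add mult_ac)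

lemma box_pc_pst: "e < m \<Longrightarrow> in_span_box n m (\<lambda>z w. w ^ e * (pcoef P n a z * pst P n b z))"
proof -
  assume e: "e < m"
  have "in_span_box n m (\<lambda>z w. \<Sum>l\<le>n. \<Sum>l'\<le>n. (P l a * cnj (P l' b)) * z ^ (l + (n - l')) * w ^ e)"
    by (intro box_sum box_monom finite_atMost) (use e in auto)
  moreover have "(\<lambda>z w. w ^ e * (pcoef P n a z * pst P n b z)) = (\<lambda>z w. \<Sum>l\<le>n. \<Sum>l'\<le>n. (P l a * cnj (P l' b)) * z ^ (l + (n - l')) * w ^ e)"
    unfolding pc_pst_exp by (simp add: sum_distrib_left sum_distrib_right mult_ac)
  ultimately show ?thesis by simp
qed

lemma box_Xc: "e < m \<Longrightarrow> in_span_box n m (\<lambda>z w. w ^ e * Xc P n m i t z)"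
proof -
  assume e: "e < m"
  have "in_span_box n m (\<lambda>z w. w ^ e * (pcoef P n i z * pst P n t z) - w ^ e * (pcoef P n (m - t) z * pst P n (m - i) z))"
    by (intro box_diff box_pc_pst e)
  then show ?thesis unfolding Xc_def by (simp add: algebra_simps)
qed

lemma Aex_pairs: "Aex P n m k z w = (\<Sum>(t,i)\<in>{..k}\<times>{..m}. w ^ (i + (k - t)) * Xc P n m i t z)"
proof -
  have "Aex P n m k z w = (\<Sum>t\<le>k. \<Sum>i\<le>m. w ^ (i + (k - t)) * Xc P n m i t z)"
    unfolding Aex_def Bt_def sum_distrib_left by (intro sum.cong refl) (simp only: power_add mult_ac)
  also have "\<dots> = (\<Sum>(t,i)\<in>{..k}\<times>{..m}. w ^ (i + (k - t)) * Xc P n m i t z)"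
    by (rule sum.cartesian_product)
  finally show ?thesis .
qed

lemma Aex_box: assumes "k < m" shows "in_span_box n m (Aex P n m k)"
proof -
  define A where "A = {..k}\<times>{..m}"
  define B where "B = {(t,i). i + (k - t) < m}"
  define g where "g = (\<lambda>z w (t,i). w ^ (i + (k - t)) * Xc P n m i t z)"
  have fA: "finite A" unfolding A_def by simp
  have z2: "sum (g z w) (A - B) = 0" for z w
  proof (rule sum_invol_zero[where s="\<lambda>(t,i). (m - i, m - t)"])
    show "finite (A - B)" using fA by simp
    fix x assume "x \<in> A - B"
    then obtain t i where x: "x = (t,i)" "t \<le> k" "i \<le> m" "m \<le> i + (k - t)"
      unfolding A_def B_def by auto
    show "(case x of (t, i) \<Rightarrow> (m - i, m - t)) \<in> A - B"
      using x assms unfolding A_def B_def by auto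
    show "(case (case x of (t, i) \<Rightarrow> (m - i, m - t)) of (t, i) \<Rightarrow> (m - i, m - t)) = x"
      using x assms by auto
    have ee: "m - t + (k - (m - i)) = i + (k - t)" using x assms by auto
    show "g z w (case x of (t, i) \<Rightarrow> (m - i, m - t)) = - g z w x"
      unfolding g_def using x ee assms by (simp add: Xc_swap)
  qed
  have eq: "Aex P n m k = (\<lambda>z w. \<Sum>x\<in>A \<inter> B. g z w x)"
  proof (intro ext)
    fix z w
    have "Aex P n m k z w = sum (g z w) A" unfolding Aex_pairs A_def g_def by simp
    also have "\<dots> = sum (g z w) (A \<inter> B) + sum (g z w) (A - B)" by (rule sum.Int_Diff[OF fA])
    finally show "Aex P n m k z w = (\<Sum>x\<in>A \<inter> B. g z w x)" using z2 by simp
  qed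
  show ?thesis unfolding eq
  proof (rule box_sum)
    show "finite (A \<inter> B)" using fA by simp
    fix x assume "x \<in> A \<inter> B"
    then obtain t i where x: "x = (t,i)" "i + (k - t) < m" unfolding B_def by auto
    show "in_span_box n m (\<lambda>z w. g z w x)" unfolding g_def x using box_Xc[OF x(2)] by simp
  qed
qed


lemma coeff_zero_from_many:
  fixes d :: "nat \<Rightarrow> complex" and w :: complex
  assumes "\<And>e. w * e \<noteq> 1 \<Longrightarrow> (\<Sum>c\<le>N. d c * e ^ c) = 0"
  shows "\<forall>c\<le>N. d c = 0"
proof (rule ccontr)
  assume "\<not> (\<forall>c\<le>N. d c = 0)"
  then have "finite {e. (\<Sum>c\<le>N. d c * e ^ c) = 0}" using polyfun_finite_roots by blast
  moreover have "UNIV \<subseteq> {e. (\<Sum>c\<le>N. d c * e ^ c) = 0} \<union> {1 / w}"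
  proof
    fix e :: complex assume "e \<in> UNIV"
    show "e \<in> {e. (\<Sum>c\<le>N. d c * e ^ c) = 0} \<union> {1 / w}"
    proof (cases "w * e = 1")
      case True then have "e = 1 / w" by (metis mult_eq_0_iff nonzero_eq_divide_eq one_neq_zero mult.commute)
      then show ?thesis by simp
    next
      case False then show ?thesis using assms by simp
    qed
  qed
  ultimately have "finite (UNIV :: complex set)" by (meson finite_Un finite.emptyI finite.insertI finite_subset)
  then show False by (simp add: infinite_UNIV_char_0)
qed

lemma bipoly_isCont: "is_bipoly f \<Longrightarrow> isCont (\<lambda>z. f z w) z0"
proof -
  assume "is_bipoly f"
  then obtain C N where f: "\<And>z w. f z w = (\<Sum>i\<le>N. \<Sum>j\<le>N. C i j * z ^ i * w ^ j)"
    unfolding is_bipoly_def by blast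
  show ?thesis unfolding f by (intro continuous_intros)
qed

lemma Aex_isCont: "isCont (\<lambda>z. Aex P n m c z w) z0"
  unfolding Aex_def Bt_def Xc_def pcoef_def pst_def by (intro continuous_intros)

lemma a_eq_Aex:
  assumes m: "1 \<le> m"
    and a_poly: "\<And>j. j < m \<Longrightarrow> is_bipoly (a j)"
    and a_def: "\<And>z w \<eta>. z \<noteq> 0 \<Longrightarrow> w * cnj \<eta> \<noteq> 1 \<Longrightarrow>
                   Lker P n m z w \<eta> = (\<Sum>j<m. a j z w * cnj \<eta> ^ j)"
    and c: "c < m"
  shows "a c = Aex P n m c"
proof -
  have lt: "{..<m} = {..m-1}" using m by auto
  have nz: "a c z w = Aex P n m c z w" if z: "z \<noteq> 0" for z w
  proof -
    have "\<forall>j\<le>m-1. a j z w - Aex P n m j z w = 0"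
    proof (rule coeff_zero_from_many[where w=w])
      fix e assume e: "w * e \<noteq> 1"
      have e': "w * cnj (cnj e) \<noteq> 1" using e by simp
      have "(\<Sum>j\<le>m-1. (a j z w - Aex P n m j z w) * e ^ j)
          = (\<Sum>j<m. a j z w * cnj (cnj e) ^ j) - (\<Sum>j<m. Aex P n m j z w * cnj (cnj e) ^ j)"
        unfolding lt by (simp add: left_diff_distrib sum_subtractf)
      also have "\<dots> = 0" using a_def[OF z e'] Lker_alt[OF z e' m] by simp
      finally show "(\<Sum>j\<le>m-1. (a j z w - Aex P n m j z w) * e ^ j) = 0" .
    qed
    then show ?thesis using c by auto
  qed
  show ?thesis
  proof (intro ext)
    fix z w
    show "a c z w = Aex P n m c z w"
    proof (cases "z = 0")
      case False then show ?thesis using nz by simp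
    next
      case True
      define h where "h = (\<lambda>z. a c z w - Aex P n m c z w)"
      have ch: "isCont h 0" unfolding h_def
        by (intro continuous_intros bipoly_isCont a_poly c Aex_isCont)
      have l1: "(h \<longlongrightarrow> h 0) (at 0)" using ch by (simp add: isCont_def)
      have "eventually (\<lambda>x. 0 = h x) (at 0)"
        unfolding eventually_at_filter h_def by (auto intro!: always_eventually simp: nz)
      then have l2: "(h \<longlongrightarrow> 0) (at 0)" by (rule Lim_transform_eventually[OF tendsto_const])
      have "h 0 = 0" using tendsto_unique[OF at_neq_bot l1 l2] .
      then show ?thesis using True unfolding h_def by simp
    qed
  qed
qed


lemma cis_vd: "((\<lambda>y. cis (c * y)) has_vector_derivative (\<i> * of_real c * cis (c * y))) (at y within S)"
proof -
  have "((\<lambda>y. cis (c * y)) has_derivative (\<lambda>t. (c * t) *\<^sub>R (\<i> * cis (c * y)))) (at y within S)"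
    by (rule has_derivative_cis) (rule has_derivative_mult_right[OF has_derivative_ident])
  moreover have "(\<lambda>t. (c * t) *\<^sub>R (\<i> * cis (c * y))) = (\<lambda>t. t *\<^sub>R (\<i> * of_real c * cis (c * y)))"
    by (auto simp: scaleR_conv_of_real)
  ultimately show ?thesis unfolding has_vector_derivative_def by simp
qed

lemma cis_int_pi: "cis (of_int s * pi) = cis (- (of_int s * pi))"
proof -
  have "cis (- (of_int s * pi)) * cis (2 * pi * of_int s) = cis (of_int s * pi)"
    by (simp add: cis_mult algebra_simps)
  then show ?thesis by simp
qed

lemma cis_int_has_integral:
  "((\<lambda>y. cis (of_int s * y)) has_integral (if s = 0 then 2 * pi else 0)) {-pi..pi}"
proof (cases "s = 0")
  case True
  then show ?thesis using has_integral_const_real[of "1::complex" "-pi" pi] by (simp add: scaleR_conv_of_real)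
next
  case False
  define F where "F = (\<lambda>y. cis (of_int s * y) / (\<i> * of_int s))"
  have "((\<lambda>y. cis (of_int s * y)) has_integral (F pi - F (-pi))) {-pi..pi}"
  proof (rule fundamental_theorem_of_calculus)
    fix y :: real assume "y \<in> {-pi..pi}"
    have "((\<lambda>y. cis (of_int s * y)) has_vector_derivative (\<i> * of_real (of_int s) * cis (of_int s * y))) (at y within {-pi..pi})"
      by (rule cis_vd)
    then have "((\<lambda>y. cis (of_int s * y) * (1 / (\<i> * of_int s))) has_vector_derivative (\<i> * of_real (of_int s) * cis (of_int s * y)) * (1 / (\<i> * of_int s))) (at y within {-pi..pi})"
      by (rule has_vector_derivative_mult_left)
    then show "(F has_vector_derivative cis (of_int s * y)) (at y within {-pi..pi})"
      unfolding F_def using False by (simp add: field_simps)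
  qed (use pi_gt_zero in simp)
  moreover have "F pi - F (-pi) = 0" unfolding F_def using cis_int_pi[of s] by simp
  ultimately show ?thesis using False by simp
qed

lemma cis_int_integral: "integral {-pi..pi} (\<lambda>y. cis (of_int s * y)) = (if s = 0 then 2 * pi else 0)"
  using cis_int_has_integral integral_unique by blast


lemma circle_mean_zero:
  fixes c :: "nat \<Rightarrow> complex" and M s :: nat
  assumes nz: "\<And>w. cmod w \<le> 1 \<Longrightarrow> (\<Sum>j\<le>M. c j * w ^ j) \<noteq> 0" and s: "1 \<le> s"
  shows "integral {-pi..pi} (\<lambda>y. cis y ^ s / (\<Sum>j\<le>M. c j * cis y ^ j)) = 0"
proof -
  define q where "q = (\<lambda>w. \<Sum>j\<le>M. c j * w ^ j)"
  define q' where "q' = (\<lambda>w::complex. \<Sum>j\<le>M. c j * (of_nat j * w ^ (j - 1)))"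
  define F where "F = (\<lambda>w. w ^ s / q w)"
  define F' where "F' = (\<lambda>w. (of_nat s * w ^ (s - 1) * q w - w ^ s * q' w) / (q w)^2)"
  have dq: "(q has_field_derivative q' w) (at w)" for w
    unfolding q_def q'_def by (auto intro!: derivative_eq_intros sum.cong simp: mult_ac)
  have dF: "(F has_field_derivative F' w) (at w)" if "q w \<noteq> 0" for w
    unfolding F_def F'_def using that
    by (auto intro!: derivative_eq_intros dq simp: power2_eq_square)
  have qnz: "q (of_real r * cis t) \<noteq> 0" if "r \<in> {0..1}" for r t
    unfolding q_def by (rule nz) (use that in \<open>simp add: norm_mult\<close>)
  define f where "f = (\<lambda>r t. F (of_real r * cis t))"
  define fx where "fx = (\<lambda>r t. cis t * F' (of_real r * cis t))"
  define J where "J = (\<lambda>r. integral (cbox (-pi) pi) (f r))"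
  have contF': "continuous_on ({0..1} \<times> cbox (-pi) pi) (\<lambda>(r, t). fx r t)"
    unfolding fx_def F'_def q_def q'_def split_beta
    using qnz[unfolded q_def] by (auto intro!: continuous_intros)
  have contF: "continuous_on (cbox (-pi) pi) (f r)" if "r \<in> {0..1}" for r
    unfolding f_def F_def q_def
    using qnz[unfolded q_def] that by (auto intro!: continuous_intros)
  have vd: "((\<lambda>r. f r t) has_vector_derivative fx r t) (at r within {0..1})" if "r \<in> {0..1}" for r t
  proof -
    have o: "((\<lambda>r. of_real r) has_vector_derivative (1::complex)) (at r within {0..1})"
      using has_vector_derivative_of_real[OF DERIV_ident, where F="at r within {0..1}"] by simp
    have "((\<lambda>r. of_real r * cis t) has_vector_derivative (1 * cis t)) (at r within {0..1})"
      by (rule has_vector_derivative_mult_left[OF o])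
    moreover have "(F has_field_derivative F' (of_real r * cis t)) (at (of_real r * cis t) within (\<lambda>r. of_real r * cis t) ` {0..1})"
      by (rule has_field_derivative_at_within[OF dF[OF qnz[OF that]]])
    ultimately have "((F \<circ> (\<lambda>r. of_real r * cis t)) has_vector_derivative (1 * cis t * F' (of_real r * cis t))) (at r within {0..1})"
      by (rule field_vector_diff_chain_within)
    then show ?thesis unfolding f_def fx_def o_def by simp
  qed
  have Jd: "(J has_vector_derivative integral (cbox (-pi) pi) (fx r)) (at r within {0..1})" if "r \<in> {0..1}" for r
    unfolding J_def
    by (rule leibniz_rule_vector_derivative[OF vd integrable_continuous contF' that convex_real_interval(5)])
       (use contF in auto)
  have fx0: "integral (cbox (-pi) pi) (fx r) = 0" if "r \<in> {0..1}" for r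
  proof (cases "r = 0")
    case True
    have "integral {-pi..pi} (\<lambda>t. cis t * F' 0) = integral {-pi..pi} (\<lambda>t. cis (of_int 1 * t)) * F' 0"
      by simp
    also have "\<dots> = 0" by (simp only: cis_int_integral) simp
    finally show ?thesis unfolding fx_def True by simp
  next
    case False
    then have rpos: "r > 0" using that by auto
    define G where "G = (\<lambda>t. F (of_real r * cis t))"
    have "((\<lambda>t. cis t * F' (of_real r * cis t) * (of_real r * \<i>)) has_integral (G pi - G (-pi))) {-pi..pi}"
    proof (rule fundamental_theorem_of_calculus)
      fix t :: real assume "t \<in> {-pi..pi}"
      have cv: "((\<lambda>t. cis t) has_vector_derivative (\<i> * cis t)) (at t within {-pi..pi})"
        using cis_vd[of 1 t "{-pi..pi}"] by simp
      have "((\<lambda>t. of_real r * cis t) has_vector_derivative (of_real r * (\<i> * cis t))) (at t within {-pi..pi})"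
        by (intro has_vector_derivative_mult_right cv)
      moreover have "(F has_field_derivative F' (of_real r * cis t)) (at (of_real r * cis t) within (\<lambda>t. of_real r * cis t) ` {-pi..pi})"
        by (rule has_field_derivative_at_within[OF dF[OF qnz]]) (use that in auto)
      ultimately have "((F \<circ> (\<lambda>t. of_real r * cis t)) has_vector_derivative ((of_real r * (\<i> * cis t)) * F' (of_real r * cis t))) (at t within {-pi..pi})"
        by (rule field_vector_diff_chain_within)
      then show "(G has_vector_derivative cis t * F' (of_real r * cis t) * (of_real r * \<i>)) (at t within {-pi..pi})"
        unfolding G_def o_def by (simp add: mult_ac)
    qed (use pi_gt_zero in simp)
    moreover have "G pi - G (-pi) = 0" unfolding G_def using cis_int_pi[of 1] by simp
    ultimately have hi: "((\<lambda>t. cis t * F' (of_real r * cis t) * (of_real r * \<i>)) has_integral 0) {-pi..pi}" by simp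
    have "((\<lambda>t. cis t * F' (of_real r * cis t) * (of_real r * \<i>) * inverse (of_real r * \<i>)) has_integral 0 * inverse (of_real r * \<i>)) {-pi..pi}"
      by (rule has_integral_mult_left[OF hi])
    moreover have "(\<lambda>t. cis t * F' (of_real r * cis t) * (of_real r * \<i>) * inverse (of_real r * \<i>)) = (\<lambda>t. cis t * F' (of_real r * cis t))"
    proof
      fix t
      have k: "of_real r * \<i> \<noteq> 0" using rpos by simp
      show "cis t * F' (of_real r * cis t) * (of_real r * \<i>) * inverse (of_real r * \<i>) = cis t * F' (of_real r * cis t)"
        using right_inverse[OF k] by (metis mult.assoc mult_1_right)
    qed
    ultimately have "((\<lambda>t. cis t * F' (of_real r * cis t)) has_integral 0) {-pi..pi}"
      by simp
    then show ?thesis unfolding fx_def by (simp add: integral_unique)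
  qed
  obtain C where C: "\<And>r. r \<in> {0..1} \<Longrightarrow> J r = C"
    by (rule has_vector_derivative_zero_constant[of "{0..1}" J]) (use Jd fx0 in auto)
  have "J 1 = J 0" using C[of 1] C[of 0] by simp
  moreover have "J 0 = 0" unfolding J_def f_def F_def using s by (simp add: power_0_left)
  ultimately have "J 1 = 0" by simp
  then show ?thesis unfolding J_def f_def F_def q_def by simp
qed


definition Ip :: "(nat \<Rightarrow> nat \<Rightarrow> complex) \<Rightarrow> nat \<Rightarrow> nat \<Rightarrow> complex \<Rightarrow> int \<Rightarrow> complex" where
  "Ip P n m z s = integral {-pi..pi} (\<lambda>y. cis (of_int s * y) / peval P n m z (cis y))"

lemma cis_pow_cnj: "cis y ^ a * cnj (cis y) ^ b = cis (of_int (int a - int b) * y)"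
  unfolding cis_cnj Complex.DeMoivre cis_mult by (simp add: algebra_simps)

lemma cis_pow: "cis y ^ a = cis (of_int (int a) * y)"
  unfolding Complex.DeMoivre by simp

lemma stable_circ: "stable P n m \<Longrightarrow> cmod z = 1 \<Longrightarrow> peval P n m z (cis y) \<noteq> 0"
  unfolding stable_def by simp

lemma stable_circ': "stable P n m \<Longrightarrow> cmod z = 1 \<Longrightarrow> cmod w \<le> 1 \<Longrightarrow> (\<Sum>j\<le>m. pcoef P n j z * w ^ j) \<noteq> 0"
  unfolding stable_def peval_alt[symmetric] by simp

lemma cont_peval_circ: "continuous_on S (\<lambda>y. peval P n m z (cis y))"
  unfolding peval_def by (intro continuous_intros)

lemma integrable_circ:
  assumes "stable P n m" "cmod z = 1" "continuous_on {-pi..pi} g"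
  shows "(\<lambda>y. g y / peval P n m z (cis y)) integrable_on {-pi..pi}"
  by (rule integrable_continuous_interval)
     (intro continuous_intros assms(3) cont_peval_circ, use stable_circ[OF assms(1,2)] in auto)

lemma Ip_pos: assumes "stable P n m" "cmod z = 1" "1 \<le> s" shows "Ip P n m z s = 0"
proof -
  obtain s' where s': "s = int s'" "1 \<le> s'" using assms(3) by (metis nat_0_le nat_le_iff int_one_le_iff_zero_less dual_order.trans zero_le_one of_nat_1 int_eq_iff)
  have "Ip P n m z s = integral {-pi..pi} (\<lambda>y. cis y ^ s' / (\<Sum>j\<le>m. pcoef P n j z * cis y ^ j))"
    unfolding Ip_def peval_alt s'(1) cis_pow by simp
  also have "\<dots> = 0"
    by (rule circle_mean_zero[OF stable_circ'[OF assms(1,2)] s'(2)])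
  finally show ?thesis .
qed

lemma F2: assumes "stable P n m" "cmod z = 1" "j < m" "k < m"
  shows "(\<Sum>t\<le>k. pcoef P n t z * Ip P n m z (int j + int t - int k)) = (if j = k then 2 * pi else 0)"
proof (cases "k < j")
  case True
  then have "(\<Sum>t\<le>k. pcoef P n t z * Ip P n m z (int j + int t - int k)) = 0"
    by (intro sum.neutral ballI) (simp add: Ip_pos[OF assms(1,2)])
  then show ?thesis using True by simp
next
  case False
  define d where "d = k - j"
  have kd: "int j + int t - int k = int t - int d" for t using False unfolding d_def by simp
  have "(\<Sum>t\<le>m. pcoef P n t z * Ip P n m z (int t - int d)) =
        (\<Sum>t\<le>k. pcoef P n t z * Ip P n m z (int t - int d)) + (\<Sum>t\<in>{k<..m}. pcoef P n t z * Ip P n m z (int t - int d))"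
  proof -
    have "{..m} = {..k} \<union> {k<..m}" using assms(4) by auto
    then show ?thesis by (simp only:) (rule sum.union_disjoint, auto)
  qed
  moreover have "(\<Sum>t\<in>{k<..m}. pcoef P n t z * Ip P n m z (int t - int d)) = 0"
    by (intro sum.neutral ballI) (auto simp: d_def Ip_pos[OF assms(1,2)])
  moreover have "(\<Sum>t\<le>m. pcoef P n t z * Ip P n m z (int t - int d)) = (if d = 0 then 2 * pi else 0)"
  proof -
    have "(\<Sum>t\<le>m. pcoef P n t z * Ip P n m z (int t - int d)) =
        (\<Sum>t\<le>m. integral {-pi..pi} (\<lambda>y. pcoef P n t z * (cis (of_int (int t - int d) * y) / peval P n m z (cis y))))"
      unfolding Ip_def integral_mult_right by (rule refl)
    also have "\<dots> = integral {-pi..pi} (\<lambda>y. \<Sum>t\<le>m. pcoef P n t z * (cis (of_int (int t - int d) * y) / peval P n m z (cis y)))"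
      by (rule integral_sum[symmetric]) (use stable_circ[OF assms(1,2)] in \<open>auto intro!: integrable_continuous_interval continuous_intros cont_peval_circ\<close>)
    also have "\<dots> = integral {-pi..pi} (\<lambda>y. cis (of_int (- int d) * y))"
    proof (rule integral_cong)
      fix y assume "y \<in> {-pi..pi}"
      have "(\<Sum>t\<le>m. pcoef P n t z * (cis (of_int (int t - int d) * y) / peval P n m z (cis y)))
          = (\<Sum>t\<le>m. pcoef P n t z * cis y ^ t) * cis (of_int (- int d) * y) / peval P n m z (cis y)"
      proof -
        have e: "cis (of_int (int t - int d) * y) = cis y ^ t * cis (of_int (- int d) * y)" for t
          by (simp add: cis_pow cis_mult algebra_simps)
        show ?thesis unfolding e sum_distrib_right sum_divide_distrib by (simp add: mult_ac)
      qed
      also have "\<dots> = cis (of_int (- int d) * y)"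
        using stable_circ[OF assms(1,2)] by (simp add: peval_alt[symmetric])
      finally show "(\<Sum>t\<le>m. pcoef P n t z * (cis (of_int (int t - int d) * y) / peval P n m z (cis y))) = cis (of_int (- int d) * y)" .
    qed
    also have "\<dots> = (if d = 0 then 2 * pi else 0)" unfolding cis_int_integral by simp
    finally show ?thesis .
  qed
  ultimately show ?thesis using False unfolding kd d_def by auto
qed


lemma cnj_unit: assumes "cmod z = 1" shows "cnj z = 1 / z"
proof -
  have h: "z * cnj z = 1" using complex_norm_square[of z] assms by simp
  have "z \<noteq> 0" using assms by auto
  then show ?thesis using h by (simp add: eq_divide_eq mult.commute)
qed

lemma zpow_shift: "(z::complex) \<noteq> 0 \<Longrightarrow> l \<le> n \<Longrightarrow> z ^ n * (1 / z) ^ l = z ^ (n - l)"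
  by (simp add: power_diff power_one_over)

lemma pst_circle: assumes "cmod z = 1" shows "pst P n t z = z ^ n * cnj (pcoef P n t z)"
proof -
  have z0: "z \<noteq> 0" using assms by auto
  have "z ^ n * cnj (pcoef P n t z) = (\<Sum>l\<le>n. cnj (P l t) * (z ^ n * (1 / z) ^ l))"
    unfolding pcoef_def using cnj_unit[OF assms] by (simp add: sum_distrib_left mult_ac)
  also have "\<dots> = pst P n t z" unfolding pst_def
    by (intro sum.cong refl) (use z0 in \<open>simp add: zpow_shift\<close>)
  finally show ?thesis by simp
qed

lemma ptilde_torus: assumes "cmod z = 1" "cmod w = 1"
  shows "ptilde P n m z w = z ^ n * w ^ m * cnj (peval P n m z w)"
proof -
  have z0: "z \<noteq> 0" and w0: "w \<noteq> 0" using assms by auto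
  have "z ^ n * w ^ m * cnj (peval P n m z w) = (\<Sum>i\<le>n. \<Sum>j\<le>m. cnj (P i j) * (z ^ n * (1 / z) ^ i) * (w ^ m * (1 / w) ^ j))"
    unfolding peval_def using cnj_unit[OF assms(1)] cnj_unit[OF assms(2)] by (simp add: sum_distrib_left mult_ac)
  also have "\<dots> = ptilde P n m z w" unfolding ptilde_def
    by (intro sum.cong refl) (use z0 w0 in \<open>simp add: zpow_shift\<close>)
  finally show ?thesis by simp
qed

lemma alg_split: "(Q::complex) \<noteq> 0 \<Longrightarrow> R \<noteq> 0 \<Longrightarrow>
   W * (Q * (Z * A) - Z * M * R * B) * (D * E) / (Q * R) = Z * D * (A * (W * E / R) - B * (M * W * E / Q))"
  by (simp add: field_simps)

lemma integrand_split:
  assumes "cmod z = 1" "cmod w = 1" "peval P n m z w \<noteq> 0"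
  shows "Aex P n m k z w * cnj (z ^ i * w ^ j) / of_real ((cmod (peval P n m z w))^2)
    = (\<Sum>t\<le>k. z ^ n * cnj z ^ i * (cnj (pcoef P n t z) * (w ^ (k - t) * cnj w ^ j / cnj (peval P n m z w))
          - pcoef P n (m - t) z * (w ^ m * w ^ (k - t) * cnj w ^ j / peval P n m z w)))"
proof -
  define Q where "Q = peval P n m z w"
  have Q0: "Q \<noteq> 0" "cnj Q \<noteq> 0" using assms(3) unfolding Q_def by auto
  have nq: "of_real ((cmod Q)^2) = Q * cnj Q" using complex_norm_square[of Q] by simp
  have "Aex P n m k z w * cnj (z ^ i * w ^ j) / of_real ((cmod Q)^2)
      = (\<Sum>t\<le>k. w ^ (k - t) * Bt P n m t z w * (cnj z ^ i * cnj w ^ j) / (Q * cnj Q))"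
    unfolding Aex_def nq sum_distrib_right sum_divide_distrib by simp
  also have "\<dots> = (\<Sum>t\<le>k. z ^ n * cnj z ^ i * (cnj (pcoef P n t z) * (w ^ (k - t) * cnj w ^ j / cnj Q)
          - pcoef P n (m - t) z * (w ^ m * w ^ (k - t) * cnj w ^ j / Q)))"
  proof (intro sum.cong refl)
    fix t
    show "w ^ (k - t) * Bt P n m t z w * (cnj z ^ i * cnj w ^ j) / (Q * cnj Q) = z ^ n * cnj z ^ i * (cnj (pcoef P n t z) * (w ^ (k - t) * cnj w ^ j / cnj Q)
          - pcoef P n (m - t) z * (w ^ m * w ^ (k - t) * cnj w ^ j / Q))"
      unfolding Bt_alt pst_circle[OF assms(1)] ptilde_torus[OF assms(1,2)] Q_def[symmetric]
      by (rule alg_split[OF Q0])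
  qed
  finally show ?thesis unfolding Q_def .
qed

lemma inner_calc:
  assumes st: "stable P n m" and z: "cmod z = 1" and j: "j < m" and k: "k < m"
  shows "integral {-pi..pi} (\<lambda>y. Aex P n m k z (cis y) * cnj (z ^ i * cis y ^ j) / of_real ((cmod (peval P n m z (cis y)))^2))
     = z ^ n * cnj z ^ i * (if j = k then 2 * pi else 0)"
proof -
  define Q where "Q = (\<lambda>y. peval P n m z (cis y))"
  have Q0: "Q y \<noteq> 0" for y unfolding Q_def by (rule stable_circ[OF st z])
  have Qc: "continuous_on S Q" for S unfolding Q_def by (rule cont_peval_circ)
  define A where "A = (\<lambda>t y. cis y ^ (k - t) * cnj (cis y) ^ j / cnj (Q y))"
  define B where "B = (\<lambda>t y. cis y ^ m * cis y ^ (k - t) * cnj (cis y) ^ j / Q y)"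
  define zc where "zc = z ^ n * cnj z ^ i"
  have iA: "A t integrable_on {-pi..pi}" for t unfolding A_def
    by (rule integrable_continuous_interval) (use Q0 in \<open>auto intro!: continuous_intros Qc\<close>)
  have iB: "B t integrable_on {-pi..pi}" for t unfolding B_def
    by (rule integrable_continuous_interval) (use Q0 in \<open>auto intro!: continuous_intros Qc\<close>)
  have IA: "integral {-pi..pi} (A t) = cnj (Ip P n m z (int j + int t - int k))" if "t \<le> k" for t
  proof -
    have "cnj (Ip P n m z (int j + int t - int k)) = integral {-pi..pi} (\<lambda>y. cnj (cis (of_int (int j + int t - int k) * y) / Q y))"
      unfolding Ip_def Q_def by (simp add: integral_cnj)
    also have "\<dots> = integral {-pi..pi} (A t)"
    proof (rule integral_cong)
      fix y
      have "cis y ^ (k - t) * cnj (cis y) ^ j = cnj (cis y ^ j * cnj (cis y) ^ (k - t))" by simp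
      also have "\<dots> = cnj (cis (of_int (int j + int t - int k) * y))"
        unfolding cis_pow_cnj using that by (simp add: of_nat_diff algebra_simps)
      finally show "cnj (cis (of_int (int j + int t - int k) * y) / Q y) = A t y"
        unfolding A_def by simp
    qed
    finally show ?thesis by simp
  qed
  have IB: "integral {-pi..pi} (B t) = 0" if "t \<le> k" for t
  proof -
    have "integral {-pi..pi} (B t) = Ip P n m z (int (m + (k - t)) - int j)"
      unfolding Ip_def B_def Q_def
    proof (rule integral_cong)
      fix y
      show "cis y ^ m * cis y ^ (k - t) * cnj (cis y) ^ j / peval P n m z (cis y) = cis (of_int (int (m + (k - t)) - int j) * y) / peval P n m z (cis y)"
      proof -
        have e: "cis y ^ m * cis y ^ (k - t) * cnj (cis y) ^ j = cis (of_int (int (m + (k - t)) - int j) * y)"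
          unfolding cis_pow_cnj[symmetric] by (simp add: power_add)
        show ?thesis unfolding e ..
      qed
    qed
    also have "\<dots> = 0" by (rule Ip_pos[OF st z]) (use j in auto)
    finally show ?thesis .
  qed
  have "integral {-pi..pi} (\<lambda>y. Aex P n m k z (cis y) * cnj (z ^ i * cis y ^ j) / of_real ((cmod (peval P n m z (cis y)))^2))
      = integral {-pi..pi} (\<lambda>y. \<Sum>t\<le>k. zc * cnj (pcoef P n t z) * A t y - zc * pcoef P n (m - t) z * B t y)"
  proof (rule integral_cong)
    fix y
    show "Aex P n m k z (cis y) * cnj (z ^ i * cis y ^ j) / of_real ((cmod (peval P n m z (cis y)))^2)
      = (\<Sum>t\<le>k. zc * cnj (pcoef P n t z) * A t y - zc * pcoef P n (m - t) z * B t y)"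
      unfolding integrand_split[OF z norm_cis stable_circ[OF st z]] A_def B_def zc_def Q_def
      by (simp add: algebra_simps)
  qed
  also have "\<dots> = (\<Sum>t\<le>k. integral {-pi..pi} (\<lambda>y. zc * cnj (pcoef P n t z) * A t y - zc * pcoef P n (m - t) z * B t y))"
    by (rule integral_sum) (auto intro!: integrable_diff integrable_on_mult_right iA iB)
  also have "\<dots> = (\<Sum>t\<le>k. zc * cnj (pcoef P n t z) * integral {-pi..pi} (A t) - zc * pcoef P n (m - t) z * integral {-pi..pi} (B t))"
    by (intro sum.cong refl) (subst integral_diff, auto intro!: integrable_on_mult_right iA iB)
  also have "\<dots> = (\<Sum>t\<le>k. zc * cnj (pcoef P n t z * Ip P n m z (int j + int t - int k)))"
    by (intro sum.cong refl) (simp add: IA IB)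
  also have "\<dots> = zc * cnj (\<Sum>t\<le>k. pcoef P n t z * Ip P n m z (int j + int t - int k))"
    by (simp add: sum_distrib_left)
  also have "\<dots> = zc * (if j = k then 2 * pi else 0)"
    unfolding F2[OF st z j k] by simp
  finally show ?thesis unfolding zc_def .
qed


definition bicont :: "(complex \<Rightarrow> complex \<Rightarrow> complex) \<Rightarrow> bool" where
  "bicont f \<longleftrightarrow> continuous_on UNIV (\<lambda>x. f (fst x) (snd x))"

lemma bicont_torus: "bicont f \<Longrightarrow> continuous_on S (\<lambda>x::real\<times>real. f (cis (fst x)) (cis (snd x)))"
proof -
  assume a: "bicont f"
  have c: "continuous_on S (\<lambda>x::real\<times>real. (cis (fst x), cis (snd x)))" by (intro continuous_intros)
  show ?thesis
    using continuous_on_compose2[of UNIV "\<lambda>x. f (fst x) (snd x)" S "\<lambda>x. (cis (fst x), cis (snd x))"] a c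
    unfolding bicont_def by auto
qed

lemma bicont_box: "in_span_box n m f \<Longrightarrow> bicont f"
proof -
  assume "in_span_box n m f"
  then obtain C where C: "\<And>z w. f z w = (\<Sum>i\<le>2*n. \<Sum>j<m. C i j * z ^ i * w ^ j)"
    unfolding in_span_box_def by blast
  show ?thesis unfolding bicont_def C by (intro continuous_intros)
qed

lemma bicont_monom: "bicont (monom2 i j)"
  unfolding bicont_def monom2_def by (intro continuous_intros)

definition wint :: "(nat \<Rightarrow> nat \<Rightarrow> complex) \<Rightarrow> nat \<Rightarrow> nat \<Rightarrow> (complex \<Rightarrow> complex \<Rightarrow> complex)
    \<Rightarrow> (complex \<Rightarrow> complex \<Rightarrow> complex) \<Rightarrow> real \<times> real \<Rightarrow> complex" where
  "wint P n m f g = (\<lambda>x. f (cis (fst x)) (cis (snd x)) * cnj (g (cis (fst x)) (cis (snd x)))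
          / of_real ((cmod (peval P n m (cis (fst x)) (cis (snd x)))) ^ 2))"

lemma wip_wint: "wip P n m f g = integral (cbox (-pi, -pi) (pi, pi)) (wint P n m f g) / of_real (4 * pi ^ 2)"
  unfolding wip_def wint_def ..

lemma peval_torus_nz: "stable P n m \<Longrightarrow> peval P n m (cis x) (cis y) \<noteq> 0"
  unfolding stable_def by simp

lemma cont_peval2: "continuous_on S (\<lambda>x::real\<times>real. peval P n m (cis (fst x)) (cis (snd x)))"
  unfolding peval_def by (intro continuous_intros)

lemma wint_cont: "stable P n m \<Longrightarrow> bicont f \<Longrightarrow> bicont g \<Longrightarrow> continuous_on S (wint P n m f g)"
  unfolding wint_def
  by (intro continuous_intros bicont_torus cont_peval2 continuous_on_norm)
     (auto simp: peval_torus_nz)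

lemma wint_integrable: "stable P n m \<Longrightarrow> bicont f \<Longrightarrow> bicont g \<Longrightarrow> wint P n m f g integrable_on cbox (-pi, -pi) (pi, pi)"
  by (rule integrable_continuous) (rule wint_cont)

lemma fubini_torus: fixes h :: "real \<times> real \<Rightarrow> complex" shows "continuous_on (cbox (-pi, -pi) (pi, pi)) h \<Longrightarrow>
  integral (cbox (-pi, -pi) (pi, pi)) h = integral {-pi..pi} (\<lambda>x. integral {-pi..pi} (\<lambda>y. h (x, y)))"
  using integral_prod_continuous[of "-pi" "-pi" pi pi h] by simp

lemma mono_int: "integral {-pi..pi} (\<lambda>y. cis y ^ e * cnj (cis y) ^ b) = (if e = b then 2 * pi else 0)"
  unfolding cis_pow_cnj cis_int_integral by simp

lemma wip_Aex_monom:
  assumes st: "stable P n m" and j: "j < m" and k: "k < m"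
  shows "wip P n m (Aex P n m k) (monom2 i j) = (if i = n \<and> j = k then 1 else 0)"
proof -
  have bA: "bicont (Aex P n m k)" unfolding bicont_def Aex_def Bt_def Xc_def pcoef_def pst_def
    by (intro continuous_intros)
  have "integral (cbox (-pi, -pi) (pi, pi)) (wint P n m (Aex P n m k) (monom2 i j))
     = integral {-pi..pi} (\<lambda>x. integral {-pi..pi} (\<lambda>y. wint P n m (Aex P n m k) (monom2 i j) (x, y)))"
    by (rule fubini_torus) (rule wint_cont[OF st bA bicont_monom])
  also have "\<dots> = integral {-pi..pi} (\<lambda>x. (if j = k then 2 * pi else 0) * (cis x ^ n * cnj (cis x) ^ i))"
  proof (rule integral_cong)
    fix x
    show "integral {-pi..pi} (\<lambda>y. wint P n m (Aex P n m k) (monom2 i j) (x, y)) = (if j = k then 2 * pi else 0) * (cis x ^ n * cnj (cis x) ^ i)"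
      unfolding wint_def monom2_def fst_conv snd_conv inner_calc[OF st norm_cis j k] by simp
  qed
  also have "\<dots> = (if j = k then 2 * pi else 0) * (if n = i then 2 * pi else 0)"
    unfolding integral_mult_right mono_int by simp
  finally show ?thesis unfolding wip_wint by (auto simp: power2_eq_square)
qed


lemma sum_if_mult: "finite S \<Longrightarrow> (\<Sum>j\<in>S. f j * (if j = b then K else 0)) = (if b \<in> S then f b * K else (0::complex))"
proof -
  assume "finite S"
  have "(\<Sum>j\<in>S. f j * (if j = b then K else 0)) = (\<Sum>j\<in>S. if j = b then f b * K else 0)"
    by (intro sum.cong) auto
  then show ?thesis using \<open>finite S\<close> by simp
qed

lemma mono_int': "integral {-pi..pi} (\<lambda>y. cis y ^ e * cnj (cis y) ^ b) = (if e = b then complex_of_real (2 * pi) else 0)"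
  unfolding mono_int by simp

lemma box_fourier:
  assumes g: "\<And>z w. g z w = (\<Sum>i\<le>2*n. \<Sum>j<m. C i j * z ^ i * w ^ j)" and a: "a \<le> 2*n" and b: "b < m"
  shows "integral (cbox (-pi, -pi) (pi, pi)) (\<lambda>x. g (cis (fst x)) (cis (snd x)) * cnj (cis (fst x) ^ a * cis (snd x) ^ b))
     = of_real (4 * pi ^ 2) * C a b"
proof -
  have "integral (cbox (-pi, -pi) (pi, pi)) (\<lambda>x. g (cis (fst x)) (cis (snd x)) * cnj (cis (fst x) ^ a * cis (snd x) ^ b))
    = integral {-pi..pi} (\<lambda>x. integral {-pi..pi} (\<lambda>y. g (cis x) (cis y) * cnj (cis x ^ a * cis y ^ b)))"
    by (subst fubini_torus) (auto simp: g intro!: continuous_intros)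
  also have "\<dots> = integral {-pi..pi} (\<lambda>x. \<Sum>i\<le>2*n. (2 * pi * C i b) * (cis x ^ i * cnj (cis x) ^ a))"
  proof (rule integral_cong)
    fix x
    have "integral {-pi..pi} (\<lambda>y. g (cis x) (cis y) * cnj (cis x ^ a * cis y ^ b))
       = integral {-pi..pi} (\<lambda>y. \<Sum>i\<le>2*n. \<Sum>j<m. (C i j * (cis x ^ i * cnj (cis x) ^ a)) * (cis y ^ j * cnj (cis y) ^ b))"
      unfolding g by (intro integral_cong) (simp add: sum_distrib_left sum_distrib_right mult_ac)
    also have "\<dots> = (\<Sum>i\<le>2*n. \<Sum>j<m. (C i j * (cis x ^ i * cnj (cis x) ^ a)) * integral {-pi..pi} (\<lambda>y. cis y ^ j * cnj (cis y) ^ b))"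
    proof -
      have "integral {-pi..pi} (\<lambda>y. \<Sum>i\<le>2*n. \<Sum>j<m. (C i j * (cis x ^ i * cnj (cis x) ^ a)) * (cis y ^ j * cnj (cis y) ^ b))
         = (\<Sum>i\<le>2*n. integral {-pi..pi} (\<lambda>y. \<Sum>j<m. (C i j * (cis x ^ i * cnj (cis x) ^ a)) * (cis y ^ j * cnj (cis y) ^ b)))"
        by (rule integral_sum) (auto intro!: integrable_continuous_interval continuous_intros)
      also have "\<dots> = (\<Sum>i\<le>2*n. \<Sum>j<m. (C i j * (cis x ^ i * cnj (cis x) ^ a)) * integral {-pi..pi} (\<lambda>y. cis y ^ j * cnj (cis y) ^ b))"
        by (intro sum.cong refl) (subst integral_sum, auto intro!: integrable_continuous_interval continuous_intros)
      finally show ?thesis .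
    qed
    also have "\<dots> = (\<Sum>i\<le>2*n. (2 * pi * C i b) * (cis x ^ i * cnj (cis x) ^ a))"
      unfolding mono_int' sum_if_mult[OF finite_lessThan] using b by (simp add: mult_ac)
    finally show "integral {-pi..pi} (\<lambda>y. g (cis x) (cis y) * cnj (cis x ^ a * cis y ^ b)) = (\<Sum>i\<le>2*n. (2 * pi * C i b) * (cis x ^ i * cnj (cis x) ^ a))" .
  qed
  also have "\<dots> = (\<Sum>i\<le>2*n. (2 * pi * C i b) * integral {-pi..pi} (\<lambda>x. cis x ^ i * cnj (cis x) ^ a))"
    by (subst integral_sum, auto intro!: integrable_continuous_interval continuous_intros)
  also have "\<dots> = of_real (4 * pi ^ 2) * C a b"
    unfolding mono_int' sum_if_mult[OF finite_atMost] using a by (simp add: power2_eq_square mult_ac)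
  finally show ?thesis .
qed


lemma pst_pbar: "z \<noteq> 0 \<Longrightarrow> pst P n t z = z ^ n * pbar P n t (1 / z)"
  unfolding pst_def pbar_def sum_distrib_left
  by (intro sum.cong refl) (simp add: zpow_shift mult_ac)

lemma Xc_diag: assumes z: "z \<noteq> 0" and k: "k < m"
  shows "(\<Sum>t\<le>k. Xc P n m t t z) = z ^ n * Tent P n m z k k"
proof -
  define f where "f = (\<lambda>u. pcoef P n u z * pbar P n u (1 / z) - pbar P n (m - u) (1 / z) * pcoef P n (m - u) z)"
  have "Tent P n m z k k = (\<Sum>s\<le>k. (if s \<le> k then pcoef P n (k - s) z else 0) * (if s \<le> k then pbar P n (k - s) (1 / z) else 0)
    - (if s \<le> k then pbar P n (m - k + s) (1 / z) else 0) * (if s \<le> k then pcoef P n (m - k + s) z else 0))"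
    unfolding Tent_def by (rule sum.mono_neutral_right) (use k in auto)
  also have "\<dots> = (\<Sum>s\<le>k. f (k - s))"
    by (intro sum.cong refl) (use k in \<open>auto simp: f_def\<close>)
  also have "\<dots> = (\<Sum>s\<le>k. f s)" by (rule sum_rev_atMost)
  finally have T: "Tent P n m z k k = (\<Sum>s\<le>k. f s)" .
  show ?thesis unfolding T sum_distrib_left Xc_def f_def pst_pbar[OF z]
    by (intro sum.cong refl) (simp add: algebra_simps)
qed

lemma Aex_fourier:
  assumes k: "k < m"
  shows "integral (cbox (-pi, -pi) (pi, pi)) (\<lambda>x. Aex P n m k (cis (fst x)) (cis (snd x)) * cnj (cis (fst x) ^ n * cis (snd x) ^ k))
     = of_real (2 * pi) * integral {-pi..pi} (\<lambda>\<theta>. Tent P n m (cis \<theta>) k k)"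
proof -
  have "integral (cbox (-pi, -pi) (pi, pi)) (\<lambda>x. Aex P n m k (cis (fst x)) (cis (snd x)) * cnj (cis (fst x) ^ n * cis (snd x) ^ k))
    = integral {-pi..pi} (\<lambda>x. integral {-pi..pi} (\<lambda>y. Aex P n m k (cis x) (cis y) * cnj (cis x ^ n * cis y ^ k)))"
    by (subst fubini_torus) (auto simp: Aex_def Bt_def Xc_def pcoef_def pst_def intro!: continuous_intros)
  also have "\<dots> = integral {-pi..pi} (\<lambda>x. of_real (2 * pi) * Tent P n m (cis x) k k)"
  proof (rule integral_cong)
    fix x
    define z where "z = cis x"
    have z0: "z \<noteq> 0" unfolding z_def by simp
    have zz: "cnj z ^ n * z ^ n = 1" unfolding z_def by (simp add: cis_cnj cis_mult Complex.DeMoivre[symmetric] power_mult_distrib[symmetric])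
    have "integral {-pi..pi} (\<lambda>y. Aex P n m k z (cis y) * cnj (z ^ n * cis y ^ k))
       = integral {-pi..pi} (\<lambda>y. \<Sum>t\<le>k. \<Sum>i\<le>m. (Xc P n m i t z * cnj z ^ n) * (cis y ^ (i + (k - t)) * cnj (cis y) ^ k))"
    proof (intro integral_cong)
      fix y
      have e: "cis y ^ (k - t) * (cis y ^ i * Xc P n m i t z) * cnj (z ^ n * cis y ^ k) = (Xc P n m i t z * cnj z ^ n) * (cis y ^ (i + (k - t)) * cnj (cis y) ^ k)" for t i
        by (simp only: power_add complex_cnj_mult complex_cnj_power mult_ac)
      show "Aex P n m k z (cis y) * cnj (z ^ n * cis y ^ k) = (\<Sum>t\<le>k. \<Sum>i\<le>m. (Xc P n m i t z * cnj z ^ n) * (cis y ^ (i + (k - t)) * cnj (cis y) ^ k))"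
        by (simp only: Aex_def Bt_def sum_distrib_left sum_distrib_right e)
    qed
    also have "\<dots> = (\<Sum>t\<le>k. \<Sum>i\<le>m. (Xc P n m i t z * cnj z ^ n) * integral {-pi..pi} (\<lambda>y. cis y ^ (i + (k - t)) * cnj (cis y) ^ k))"
    proof -
      have "integral {-pi..pi} (\<lambda>y. \<Sum>t\<le>k. \<Sum>i\<le>m. (Xc P n m i t z * cnj z ^ n) * (cis y ^ (i + (k - t)) * cnj (cis y) ^ k))
        = (\<Sum>t\<le>k. integral {-pi..pi} (\<lambda>y. \<Sum>i\<le>m. (Xc P n m i t z * cnj z ^ n) * (cis y ^ (i + (k - t)) * cnj (cis y) ^ k)))"
        by (rule integral_sum) (auto intro!: integrable_continuous_interval continuous_intros)
      also have "\<dots> = (\<Sum>t\<le>k. \<Sum>i\<le>m. (Xc P n m i t z * cnj z ^ n) * integral {-pi..pi} (\<lambda>y. cis y ^ (i + (k - t)) * cnj (cis y) ^ k))"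
        by (intro sum.cong refl) (subst integral_sum, auto intro!: integrable_continuous_interval continuous_intros)
      finally show ?thesis .
    qed
    also have "\<dots> = (\<Sum>t\<le>k. (Xc P n m t t z * cnj z ^ n) * complex_of_real (2 * pi))"
    proof (intro sum.cong refl)
      fix t assume t: "t \<in> {..k}"
      have "(\<Sum>i\<le>m. (Xc P n m i t z * cnj z ^ n) * integral {-pi..pi} (\<lambda>y. cis y ^ (i + (k - t)) * cnj (cis y) ^ k))
         = (\<Sum>i\<le>m. (Xc P n m i t z * cnj z ^ n) * (if i = t then complex_of_real (2 * pi) else 0))"
        unfolding mono_int' by (intro sum.cong refl) (use t in auto)
      also have "\<dots> = (Xc P n m t t z * cnj z ^ n) * complex_of_real (2 * pi)"
        unfolding sum_if_mult[OF finite_atMost] using t k by simp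
      finally show "(\<Sum>i\<le>m. (Xc P n m i t z * cnj z ^ n) * integral {-pi..pi} (\<lambda>y. cis y ^ (i + (k - t)) * cnj (cis y) ^ k))
         = (Xc P n m t t z * cnj z ^ n) * complex_of_real (2 * pi)" .
    qed
    also have "\<dots> = (\<Sum>t\<le>k. Xc P n m t t z) * cnj z ^ n * complex_of_real (2 * pi)"
      by (simp add: sum_distrib_right)
    also have "\<dots> = of_real (2 * pi) * Tent P n m z k k"
      unfolding Xc_diag[OF z0 k] using zz by (simp add: mult_ac)
    finally show "integral {-pi..pi} (\<lambda>y. Aex P n m k (cis x) (cis y) * cnj (cis x ^ n * cis y ^ k)) = of_real (2 * pi) * Tent P n m (cis x) k k"
      unfolding z_def .
  qed
  also have "\<dots> = of_real (2 * pi) * integral {-pi..pi} (\<lambda>\<theta>. Tent P n m (cis \<theta>) k k)"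
    by (rule integral_mult_right)
  finally show ?thesis .
qed


lemma sum_delta2: assumes "finite I" "finite J" "a \<in> I" "b \<in> J"
  shows "(\<Sum>i\<in>I. \<Sum>j\<in>J. f i j * (if i = a \<and> j = b then 1 else 0)) = (f a b :: complex)"
proof -
  have "(\<Sum>i\<in>I. \<Sum>j\<in>J. f i j * (if i = a \<and> j = b then 1 else 0)) = (\<Sum>i\<in>I. (\<Sum>j\<in>J. f i j * (if j = b then 1 else 0)) * (if i = a then 1 else 0))"
    by (intro sum.cong refl) (auto simp: sum_distrib_right)
  also have "\<dots> = (\<Sum>i\<in>I. f i b * (if i = a then 1 else 0))"
    unfolding sum_if_mult[OF assms(2)] using assms(4) by simp
  also have "\<dots> = f a b" unfolding sum_if_mult[OF assms(1)] using assms(3) by simp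
  finally show ?thesis .
qed

lemma wip_lin2:
  assumes st: "stable P n m" and f: "bicont f" and g: "\<And>z w. g z w = (\<Sum>i\<le>2*n. \<Sum>j<m. G i j * z ^ i * w ^ j)"
  shows "wip P n m f g = (\<Sum>i\<le>2*n. \<Sum>j<m. cnj (G i j) * wip P n m f (monom2 i j))"
proof -
  have pw: "wint P n m f g x = (\<Sum>i\<le>2*n. \<Sum>j<m. cnj (G i j) * wint P n m f (monom2 i j) x)" for x
    unfolding wint_def g monom2_def
    by (simp add: sum_distrib_left sum_distrib_right sum_divide_distrib mult_ac)
  have ii: "(\<lambda>x. cnj (G i j) * wint P n m f (monom2 i j) x) integrable_on cbox (-pi, -pi) (pi, pi)" for i j
    by (intro integrable_on_mult_right wint_integrable st f bicont_monom)
  have "integral (cbox (-pi, -pi) (pi, pi)) (wint P n m f g) = (\<Sum>i\<le>2*n. integral (cbox (-pi, -pi) (pi, pi)) (\<lambda>x. \<Sum>j<m. cnj (G i j) * wint P n m f (monom2 i j) x))"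
    unfolding pw by (rule integral_sum) (auto intro!: integrable_sum ii)
  also have "\<dots> = (\<Sum>i\<le>2*n. \<Sum>j<m. cnj (G i j) * integral (cbox (-pi, -pi) (pi, pi)) (wint P n m f (monom2 i j)))"
    by (intro sum.cong refl) (subst integral_sum, auto intro!: ii)
  finally have "integral (cbox (-pi, -pi) (pi, pi)) (wint P n m f g) = (\<Sum>i\<le>2*n. \<Sum>j<m. cnj (G i j) * integral (cbox (-pi, -pi) (pi, pi)) (wint P n m f (monom2 i j)))" .
  then show ?thesis unfolding wip_wint by (simp add: sum_divide_distrib)
qed


lemma wip_diff1:
  assumes st: "stable P n m" and f: "bicont f" and a: "bicont a" and h: "bicont h"
  shows "wip P n m (\<lambda>z w. f z w - c * a z w) h = wip P n m f h - c * wip P n m a h"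
proof -
  have pw: "wint P n m (\<lambda>z w. f z w - c * a z w) h x = wint P n m f h x - c * wint P n m a h x" for x
    unfolding wint_def by (simp add: algebra_simps diff_divide_distrib)
  have "integral (cbox (-pi, -pi) (pi, pi)) (wint P n m (\<lambda>z w. f z w - c * a z w) h)
     = integral (cbox (-pi, -pi) (pi, pi)) (wint P n m f h) - c * integral (cbox (-pi, -pi) (pi, pi)) (wint P n m a h)"
    unfolding pw by (subst integral_diff) (auto intro!: integrable_on_mult_right wint_integrable st f a h)
  then show ?thesis unfolding wip_wint by (simp add: diff_divide_distrib)
qed

lemma wip_smult: "wip P n m (\<lambda>z w. c * a z w) (\<lambda>z w. c * a z w) = c * cnj c * wip P n m a a"
proof -
  have pw: "wint P n m (\<lambda>z w. c * a z w) (\<lambda>z w. c * a z w) x = (c * cnj c) * wint P n m a a x" for x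
    unfolding wint_def by (simp add: mult_ac)
  show ?thesis unfolding wip_wint pw integral_mult_right by simp
qed

lemma wip_real: "cnj (wip P n m f f) = wip P n m f f"
proof -
  have pw: "cnj (wint P n m f f x) = wint P n m f f x" for x
    unfolding wint_def by (simp add: mult.commute)
  show ?thesis unfolding wip_wint by (simp add: integral_cnj pw)
qed

lemma wip_zero:
  assumes st: "stable P n m" and g: "bicont g" and z: "wip P n m g g = 0" and x: "x \<in> cbox (-pi, -pi) (pi, pi)"
  shows "g (cis (fst x)) (cis (snd x)) = 0"
proof -
  define H where "H = (\<lambda>x::real\<times>real. (cmod (g (cis (fst x)) (cis (snd x))))^2 / (cmod (peval P n m (cis (fst x)) (cis (snd x))))^2)"
  have wH: "wint P n m g g x = of_real (H x)" for x
    unfolding wint_def H_def using complex_norm_square[of "g (cis (fst x)) (cis (snd x))"] by simp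
  have cH: "continuous_on (cbox (-pi, -pi) (pi, pi)) H"
  proof -
    have "continuous_on (cbox (-pi, -pi) (pi, pi)) (\<lambda>x. (cmod (g (cis (fst x)) (cis (snd x))))^2)"
      by (intro continuous_intros bicont_torus g)
    moreover have "continuous_on (cbox (-pi, -pi) (pi, pi)) (\<lambda>x. (cmod (peval P n m (cis (fst x)) (cis (snd x))))^2)"
      by (intro continuous_intros cont_peval2)
    ultimately show ?thesis unfolding H_def
      by (rule continuous_on_divide) (auto simp: peval_torus_nz[OF st])
  qed
  have Hi: "(H has_integral integral (cbox (-pi, -pi) (pi, pi)) H) (cbox (-pi, -pi) (pi, pi))"
    using integrable_continuous[OF cH] by (simp add: integrable_integral)
  have "(wint P n m g g has_integral of_real (integral (cbox (-pi, -pi) (pi, pi)) H)) (cbox (-pi, -pi) (pi, pi))"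
    using has_integral_of_real[OF Hi] unfolding wH .
  then have "integral (cbox (-pi, -pi) (pi, pi)) (wint P n m g g) = of_real (integral (cbox (-pi, -pi) (pi, pi)) H)"
    by (rule integral_unique)
  moreover have "integral (cbox (-pi, -pi) (pi, pi)) (wint P n m g g) = 0"
    using z unfolding wip_wint by simp
  ultimately have "integral (cbox (-pi, -pi) (pi, pi)) H = 0" by simp
  then have H0: "(H has_integral 0) (cbox (-pi, -pi) (pi, pi))" using Hi by simp
  have ne: "box (-pi, -pi) (pi, pi) \<noteq> {}"
    by (auto simp: box_ne_empty Basis_prod_def)
  have "H x = 0" by (rule has_integral_0_cbox_imp_0[OF cH _ H0 ne x]) (simp add: H_def)
  then show ?thesis unfolding H_def using peval_torus_nz[OF st] by simp
qed

lemma box_coeffs_zero: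
  assumes g: "\<And>z w. g z w = (\<Sum>i\<le>2*n. \<Sum>j<m. C i j * z ^ i * w ^ j)" and a: "a \<le> 2*n" and b: "b < m"
    and z: "\<And>x. x \<in> cbox (-pi, -pi) (pi, pi) \<Longrightarrow> g (cis (fst x)) (cis (snd x)) = 0"
  shows "C a b = 0"
proof -
  have "of_real (4 * pi ^ 2) * C a b = integral (cbox (-pi, -pi) (pi, pi)) (\<lambda>x. g (cis (fst x)) (cis (snd x)) * cnj (cis (fst x) ^ a * cis (snd x) ^ b))"
    by (rule box_fourier[OF g a b, symmetric])
  also have "\<dots> = integral (cbox (-pi, -pi) (pi, pi)) (\<lambda>x. 0)"
    by (rule integral_cong) (simp add: z)
  finally show ?thesis by simp
qed


theorem mainTheorem4:
  fixes P :: "nat \<Rightarrow> nat \<Rightarrow> complex" and n m k :: nat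
    and a :: "nat \<Rightarrow> complex \<Rightarrow> complex \<Rightarrow> complex"
  assumes "1 \<le> n" and "1 \<le> m"
    and "has_bidegree P n m" and "stable P n m"
    and "k \<le> m - 1"
    and a_poly: "\<And>j. j < m \<Longrightarrow> is_bipoly (a j)"
    and a_def: "\<And>z w \<eta>. z \<noteq> 0 \<Longrightarrow> w * cnj \<eta> \<noteq> 1 \<Longrightarrow>
                   Lker P n m z w \<eta> = (\<Sum>j<m. a j z w * cnj \<eta> ^ j)"
  shows "in_span_box n m (a k)
    \<and> (\<forall>i j. i \<le> 2*n \<longrightarrow> j < m \<longrightarrow> j \<noteq> k \<longrightarrow> wip P n m (a k) (monom2 i j) = 0)
    \<and> (\<forall>i. i \<le> 2*n \<longrightarrow> i \<noteq> n \<longrightarrow> wip P n m (a k) (monom2 i k) = 0)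
    \<and> wip P n m (a k) (a k) = integral {-pi..pi} (\<lambda>\<theta>. Tent P n m (cis \<theta>) k k) / of_real (2 * pi)
    \<and> (\<forall>f. in_span_box n m f
          \<and> (\<forall>i j. i \<le> 2*n \<longrightarrow> j < m \<longrightarrow> j \<noteq> k \<longrightarrow> wip P n m f (monom2 i j) = 0)
          \<and> (\<forall>i. i \<le> 2*n \<longrightarrow> i \<noteq> n \<longrightarrow> wip P n m f (monom2 i k) = 0)
          \<and> wip P n m f f = integral {-pi..pi} (\<lambda>\<theta>. Tent P n m (cis \<theta>) k k) / of_real (2 * pi)
        \<longrightarrow> (\<exists>c. cmod c = 1 \<and> f = (\<lambda>z w. c * a k z w)))"
proof -
  have km: "k < m" using assms(2,5) by arith
  note st = assms(4)
  have aeq: "a k = Aex P n m k" by (rule a_eq_Aex[OF assms(2) a_poly a_def km])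
  define A where "A = Aex P n m k"
  have boxA: "in_span_box n m A" unfolding A_def by (rule Aex_box[OF km])
  have bA: "bicont A" by (rule bicont_box[OF boxA])
  have orth: "wip P n m A (monom2 i j) = (if i = n \<and> j = k then 1 else 0)" if "j < m" for i j
    unfolding A_def by (rule wip_Aex_monom[OF st that km])
  define I where "I = integral {-pi..pi} (\<lambda>\<theta>. Tent P n m (cis \<theta>) k k) / of_real (2 * pi)"
  obtain C where C: "\<And>z w. A z w = (\<Sum>i\<le>2*n. \<Sum>j<m. C i j * z ^ i * w ^ j)"
    using boxA unfolding in_span_box_def by blast
  have normA: "wip P n m A A = I"
  proof -
    have "wip P n m A A = (\<Sum>i\<le>2*n. \<Sum>j<m. cnj (C i j) * wip P n m A (monom2 i j))"
      by (rule wip_lin2[OF st bA C])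
    also have "\<dots> = (\<Sum>i\<le>2*n. \<Sum>j<m. cnj (C i j) * (if i = n \<and> j = k then 1 else 0))"
      by (intro sum.cong refl) (simp add: orth)
    also have "\<dots> = cnj (C n k)" by (rule sum_delta2) (use km in auto)
    finally have w1: "wip P n m A A = cnj (C n k)" .
    have "of_real (4 * pi ^ 2) * C n k = integral (cbox (-pi, -pi) (pi, pi)) (\<lambda>x. A (cis (fst x)) (cis (snd x)) * cnj (cis (fst x) ^ n * cis (snd x) ^ k))"
      by (rule box_fourier[OF C _ km, symmetric]) simp
    also have "\<dots> = of_real (2 * pi) * integral {-pi..pi} (\<lambda>\<theta>. Tent P n m (cis \<theta>) k k)"
      unfolding A_def by (rule Aex_fourier[OF km])
    finally have e: "of_real (4 * pi ^ 2) * C n k = of_real (2 * pi) * integral {-pi..pi} (\<lambda>\<theta>. Tent P n m (cis \<theta>) k k)" .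
    have Cnk: "C n k = I"
    proof -
      have "of_real (2 * pi) * (of_real (2 * pi) * C n k) = of_real (2 * pi) * integral {-pi..pi} (\<lambda>\<theta>. Tent P n m (cis \<theta>) k k)"
        using e by (simp add: power2_eq_square mult_ac)
      then have "of_real (2 * pi) * C n k = integral {-pi..pi} (\<lambda>\<theta>. Tent P n m (cis \<theta>) k k)"
        by (simp add: mult.assoc)
      then show ?thesis unfolding I_def by (metis nonzero_mult_div_cancel_left of_real_eq_0_iff pi_neq_zero mult_eq_0_iff zero_neq_numeral)
    qed
    have "wip P n m A A = cnj (wip P n m A A)" by (simp add: wip_real)
    also have "\<dots> = C n k" using w1 by simp
    finally show ?thesis using Cnk by simp
  qed
  have Ine: "I \<noteq> 0"
  proof
    assume I0: "I = 0"
    have van: "A (cis (fst x)) (cis (snd x)) = 0" if "x \<in> cbox (-pi, -pi) (pi, pi)" for x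
      by (rule wip_zero[OF st bA _ that]) (use normA I0 in simp)
    have "C i j = 0" if "i \<le> 2*n" "j < m" for i j
      by (rule box_coeffs_zero[OF C that van])
    then have "A = (\<lambda>z w. 0)" by (intro ext) (simp add: C)
    then have "wip P n m A (monom2 n k) = 0" by (simp add: wip_def)
    then show False using orth[OF km, of n] by simp
  qed
  show ?thesis
  proof (intro conjI allI impI)
    show "in_span_box n m (a k)" using boxA aeq A_def by simp
  next
    fix i j assume "i \<le> 2 * n" "j < m" "j \<noteq> k"
    then show "wip P n m (a k) (monom2 i j) = 0" using orth aeq A_def by simp
  next
    fix i assume "i \<le> 2 * n" "i \<noteq> n"
    then show "wip P n m (a k) (monom2 i k) = 0" using orth[OF km] aeq A_def by simp
  next
    show "wip P n m (a k) (a k) = integral {-pi..pi} (\<lambda>\<theta>. Tent P n m (cis \<theta>) k k) / of_real (2 * pi)"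
      using normA aeq A_def I_def by simp
  next
    fix f assume hf: "in_span_box n m f
          \<and> (\<forall>i j. i \<le> 2*n \<longrightarrow> j < m \<longrightarrow> j \<noteq> k \<longrightarrow> wip P n m f (monom2 i j) = 0)
          \<and> (\<forall>i. i \<le> 2*n \<longrightarrow> i \<noteq> n \<longrightarrow> wip P n m f (monom2 i k) = 0)
          \<and> wip P n m f f = integral {-pi..pi} (\<lambda>\<theta>. Tent P n m (cis \<theta>) k k) / of_real (2 * pi)"
    then have fbox: "in_span_box n m f"
      and fb1: "\<And>i j. i \<le> 2*n \<Longrightarrow> j < m \<Longrightarrow> j \<noteq> k \<Longrightarrow> wip P n m f (monom2 i j) = 0"
      and fb2: "\<And>i. i \<le> 2*n \<Longrightarrow> i \<noteq> n \<Longrightarrow> wip P n m f (monom2 i k) = 0"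
      and fc: "wip P n m f f = I" unfolding I_def by auto
    have bf: "bicont f" by (rule bicont_box[OF fbox])
    obtain D where D: "\<And>z w. f z w = (\<Sum>i\<le>2*n. \<Sum>j<m. D i j * z ^ i * w ^ j)"
      using fbox unfolding in_span_box_def by blast
    define \<gamma> where "\<gamma> = wip P n m f (monom2 n k)"
    define g where "g = (\<lambda>z w. f z w - \<gamma> * A z w)"
    have gbox: "in_span_box n m g" unfolding g_def by (intro box_diff box_smult fbox boxA)
    have bg: "bicont g" by (rule bicont_box[OF gbox])
    have G: "g z w = (\<Sum>i\<le>2*n. \<Sum>j<m. (D i j - \<gamma> * C i j) * z ^ i * w ^ j)" for z w
      unfolding g_def D C by (simp add: sum_subtractf sum_distrib_left algebra_simps)
    have og: "wip P n m g (monom2 i j) = 0" if "i \<le> 2*n" "j < m" for i j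
    proof -
      have "wip P n m g (monom2 i j) = wip P n m f (monom2 i j) - \<gamma> * wip P n m A (monom2 i j)"
        unfolding g_def by (rule wip_diff1[OF st bf bA bicont_monom])
      then show ?thesis using that fb1[of i j] fb2[of i] orth[of j i] unfolding \<gamma>_def by (cases "j = k"; cases "i = n") auto
    qed
    have "wip P n m g g = (\<Sum>i\<le>2*n. \<Sum>j<m. cnj (D i j - \<gamma> * C i j) * wip P n m g (monom2 i j))"
      by (rule wip_lin2[OF st bg G])
    also have "\<dots> = 0" by (intro sum.neutral ballI) (simp add: og)
    finally have gg: "wip P n m g g = 0" .
    have vg: "g (cis (fst x)) (cis (snd x)) = 0" if "x \<in> cbox (-pi, -pi) (pi, pi)" for x
      by (rule wip_zero[OF st bg gg that])
    have "D i j - \<gamma> * C i j = 0" if "i \<le> 2*n" "j < m" for i j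
      by (rule box_coeffs_zero[OF G that vg])
    then have "g z w = 0" for z w unfolding G by simp
    then have feq: "f = (\<lambda>z w. \<gamma> * A z w)" unfolding g_def by (intro ext) (metis eq_iff_diff_eq_0)
    have "\<gamma> * cnj \<gamma> * I = I" using fc unfolding feq wip_smult normA .
    then have "\<gamma> * cnj \<gamma> = 1" using Ine by simp
    then have "complex_of_real ((cmod \<gamma>)^2) = 1" using complex_norm_square[of \<gamma>] by simp
    then have "(cmod \<gamma>)^2 = 1" by (metis of_real_eq_1_iff)
    then have "cmod \<gamma> = 1" using norm_ge_zero[of \<gamma>] by (auto simp: power2_eq_1_iff)
    then show "\<exists>c. cmod c = 1 \<and> f = (\<lambda>z w. c * a k z w)" using feq aeq A_def by auto
  qed
qed


end
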